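(* Let $K>0$ and define $\beta_k=(K+1-k)^{-1/2}$ for integers $0\le k\le K$. Suppose a real sequence $(\gamma_k)$ satisfies $\gamma_0\ge\beta_0$ and $\gamma_{k+1}\ge\gamma_k+\gamma_k^3$ for all integers $0\le k\le K-1$. Then $\gamma_k\ge\beta_k$ for all integers $0\le k\le K$. *)

theory Defs
  imports Complex_Main
begin

end

theory Submission
  imports Defs
begin

lemma key:
  fixes m g :: real
  assumes m: "m \<ge> 2" and g: "g \<ge> 1 / sqrt m"
  shows "g + g^3 \<ge> 1 / sqrt (m - 1)"
proof -
  define b where "b = 1 / sqrt m"
  have bpos: "b > 0" using m by (simp add: b_def)
  have b2: "b^2 = 1/m" using m by (simp add: b_def power_divide)
  have "b^3 \<le> g^3" using g bpos by (intro power_mono) (auto simp: b_def)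
  hence gb: "b + b^3 \<le> g + g^3" using g by (simp add: b_def)
  have sq: "(b + b^3)^2 = (1/m) * (1 + 1/m)^2"
  proof -
    have "(b + b^3)^2 = b^2 * (1 + b^2)^2" by (simp add: power2_eq_square power3_eq_cube algebra_simps)
    thus ?thesis using b2 by simp
  qed
  have ineq: "1/(m-1) \<le> (1/m) * (1 + 1/m)^2"
  proof -
    have e: "(m+1)^2 * (m-1) - m^3 = m*(m-2) + (m-1)"
      by (simp add: power2_eq_square power3_eq_cube algebra_simps)
    have "m*(m-2) \<ge> 0" using m by simp
    hence "m^3 \<le> (m+1)^2 * (m-1)" using e m by linarith
    hence "m^3 / (m^3 * (m-1)) \<le> (m+1)^2 * (m-1) / (m^3*(m-1))" using m
      by (intro divide_right_mono) auto
    moreover have "m^3 / (m^3 * (m-1)) = 1/(m-1)" using m by (simp)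
    moreover have "(m+1)^2 * (m-1) / (m^3*(m-1)) = (1/m) * (1 + 1/m)^2" using m
      by (simp add: field_simps power2_eq_square power3_eq_cube)
    ultimately show ?thesis by simp
  qed
  have "1 / sqrt (m-1) = sqrt (1/(m-1))" by (simp add: real_sqrt_divide)
  also have "\<dots> \<le> sqrt ((b + b^3)^2)" using ineq sq by simp
  also have "\<dots> = b + b^3" using bpos by simp
  finally show ?thesis using gb by simp
qed

theorem mainTheorem10:
  fixes K :: nat and \<gamma> :: "nat \<Rightarrow> real" and \<beta> :: "nat \<Rightarrow> real"
  assumes "K > 0"
    and "\<And>k. k \<le> K \<Longrightarrow> \<beta> k = (real K + 1 - real k) powr (-1/2)"
    and "\<gamma> 0 \<ge> \<beta> 0"
    and "\<And>k. k \<le> K - 1 \<Longrightarrow> \<gamma> (k+1) \<ge> \<gamma> k + \<gamma> k ^ 3"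
  shows "\<forall>k \<le> K. \<gamma> k \<ge> \<beta> k"
proof -
  have pw: "\<And>x::real. x > 0 \<Longrightarrow> x powr (-1/2) = 1 / sqrt x"
    by (simp add: powr_minus_divide powr_half_sqrt)
  have "\<gamma> k \<ge> 1 / sqrt (real K + 1 - real k)" if "k \<le> K" for k
    using that
  proof (induction k)
    case 0
    then show ?case using assms(2)[of 0] assms(3) pw[of "real K + 1"] by simp
  next
    case (Suc k)
    have ih: "\<gamma> k \<ge> 1 / sqrt (real K + 1 - real k)" using Suc by simp
    have "\<gamma> (k+1) \<ge> \<gamma> k + \<gamma> k ^ 3" using assms(4)[of k] Suc by simp
    moreover have "\<gamma> k + \<gamma> k ^ 3 \<ge> 1 / sqrt ((real K + 1 - real k) - 1)"
      using key[OF _ ih] Suc by simp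
    ultimately show ?case by simp
  qed
  thus ?thesis using assms(2) pw by (auto simp: of_nat_diff)
qed

end
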